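(* Let $n=2$, $E=\{p\in\Delta_2:p_1,p_2\in\mathbb Q\}$, and $\Theta=(\overline{\Delta}_2)^E$ with the topology of pointwise convergence. Let $\nu_0$ be the infinite product of the uniform distribution on $\overline{\Delta}_2$. Let $\delta>0$ be rational and define $\mu(0)=(\frac12,\frac12)$, $\mu(t+1)=\left(\frac{\mu_1(t)}{1+\delta\mu_2(t)},\frac{(1+\delta)\mu_2(t)}{1+\delta\mu_2(t)}\right)$. Then the wealth distributions $\{\nu_t\}_{t\ge0}$ satisfy the large deviation principle on $\Theta$ with the trivial rate function $I\equiv0$.
   Context: $\Delta_2$, $\overline{\Delta}_2$ the open and closed unit simplices in $\mathbb R^2$. Relative value of $\pi:E\to\overline{\Delta}_2$: $V_\pi(0)=1$, $V_\pi(t+1)=V_\pi(t)\sum_{i=1}^2\pi_i(\mu(t))\mu_i(t+1)/\mu_i(t)$. Wealth distribution: $\nu_t(B)=\frac{1}{\widehat V(t)}\int_BV_\pi(t)\,d\nu_0(\pi)$ with $\widehat V(t)=\int_\Theta V_\pi(t)\,d\nu_0(\pi)$. LDP with rate $I$: for closed $F$, $\limsup_t\frac1t\log\nu_t(F)\le-\inf_FI$; for open $G$, $\liminf_t\frac1t\log\nu_t(G)\ge-\inf_GI$. *)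

theory Defs
  imports "HOL-Probability.Probability"
begin

definition simplex_closed :: "(real \<times> real) set" where
  "simplex_closed = {p. fst p \<ge> 0 \<and> snd p \<ge> 0 \<and> fst p + snd p = 1}"

definition simplex_open :: "(real \<times> real) set" where
  "simplex_open = {p. fst p > 0 \<and> snd p > 0 \<and> fst p + snd p = 1}"

definition E_rat :: "(real \<times> real) set" where
  "E_rat = {p \<in> simplex_open. fst p \<in> \<rat> \<and> snd p \<in> \<rat>}"

definition unif_simplex :: "(real \<times> real) measure" where
  "unif_simplex = distr (restrict_space lborel {0..1::real})
                        (restrict_space borel simplex_closed) (\<lambda>x. (x, 1 - x))"

definition Theta_top :: "((real \<times> real) \<Rightarrow> (real \<times> real)) topology" where
  "Theta_top = product_topology (\<lambda>_. subtopology euclidean simplex_closed) E_rat"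

definition nu0 :: "((real \<times> real) \<Rightarrow> (real \<times> real)) measure" where
  "nu0 = PiM E_rat (\<lambda>_. unif_simplex)"

fun mkt :: "real \<Rightarrow> nat \<Rightarrow> real \<times> real" where
  "mkt \<delta> 0 = (1/2, 1/2)"
| "mkt \<delta> (Suc t) = (let m = mkt \<delta> t in
      (fst m / (1 + \<delta> * snd m), (1 + \<delta>) * snd m / (1 + \<delta> * snd m)))"

fun relval :: "(nat \<Rightarrow> real \<times> real) \<Rightarrow> ((real \<times> real) \<Rightarrow> (real \<times> real)) \<Rightarrow> nat \<Rightarrow> real" where
  "relval \<mu> \<pi> 0 = 1"
| "relval \<mu> \<pi> (Suc t) = relval \<mu> \<pi> t *
      (fst (\<pi> (\<mu> t)) * fst (\<mu> (Suc t)) / fst (\<mu> t)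
     + snd (\<pi> (\<mu> t)) * snd (\<mu> (Suc t)) / snd (\<mu> t))"

definition wealth_dist ::
  "((real \<times> real) \<Rightarrow> (real \<times> real)) measure \<Rightarrow> (nat \<Rightarrow> real \<times> real) \<Rightarrow> nat
     \<Rightarrow> ((real \<times> real) \<Rightarrow> (real \<times> real)) set \<Rightarrow> real" where
  "wealth_dist N \<mu> t B =
     (LINT \<pi>:B|N. relval \<mu> \<pi> t) / (LINT \<pi>|N. relval \<mu> \<pi> t)"

definition eln :: "real \<Rightarrow> ereal" where
  "eln x = (if x \<le> 0 then -\<infinity> else ereal (ln x))"

definition rate_function :: "'a topology \<Rightarrow> ('a \<Rightarrow> ereal) \<Rightarrow> bool" where
  "rate_function X I \<longleftrightarrow> (\<forall>x\<in>topspace X. I x \<ge> 0) \<and>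
     (\<forall>c. closedin X {x \<in> topspace X. I x \<le> c})"

definition LDP :: "'a topology \<Rightarrow> (nat \<Rightarrow> 'a set \<Rightarrow> real) \<Rightarrow> ('a \<Rightarrow> ereal) \<Rightarrow> bool" where
  "LDP X \<nu> I \<longleftrightarrow> rate_function X I \<and>
     (\<forall>F. closedin X F \<longrightarrow>
        limsup (\<lambda>t. ereal (1 / real t) * eln (\<nu> t F)) \<le> - (INF x\<in>F. I x)) \<and>
     (\<forall>G. openin X G \<longrightarrow>
        liminf (\<lambda>t. ereal (1 / real t) * eln (\<nu> t G)) \<ge> - (INF x\<in>G. I x))"

end

theory Submission
  imports Defs
begin


lemma space_unif: "space unif_simplex = simplex_closed"
  by (simp add: unif_simplex_def space_restrict_space)

lemma sets_unif: "sets unif_simplex = sets (restrict_space borel simplex_closed)"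
  by (simp add: unif_simplex_def space_restrict_space)

lemma unif_meas: "(\<lambda>x::real. (x, 1 - x)) \<in> measurable (restrict_space lborel {0..1}) (restrict_space borel simplex_closed)"
  by (rule measurable_restrict_space3) (auto simp: simplex_closed_def)

lemma prob_unif: "prob_space unif_simplex"
  unfolding unif_simplex_def
proof (rule prob_space.prob_space_distr[OF _ unif_meas])
  show "prob_space (restrict_space lborel {0..1::real})"
    by (rule prob_spaceI) (simp add: emeasure_restrict_space space_restrict_space)
qed

interpretation PP: product_prob_space "\<lambda>_. unif_simplex" E_rat
  by (simp add: product_prob_space_def product_sigma_finite_def prob_unif prob_space_imp_sigma_finite product_prob_space_axioms_def)

lemma prob_nu0: "prob_space nu0"
  unfolding nu0_def by (rule PP.prob_space_axioms)

lemma space_nu0: "space nu0 = PiE E_rat (\<lambda>_. simplex_closed)"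
  by (simp add: nu0_def space_PiM space_unif)


context fixes \<delta> :: real assumes dpos: "\<delta> > 0" and drat: "\<delta> \<in> \<rat>"
begin

lemma mkt_props: "fst (mkt \<delta> t) > 0 \<and> snd (mkt \<delta> t) > 0 \<and> fst (mkt \<delta> t) + snd (mkt \<delta> t) = 1
   \<and> fst (mkt \<delta> t) \<in> \<rat> \<and> snd (mkt \<delta> t) \<in> \<rat>"
proof (induction t)
  case 0 then show ?case by simp
next
  case (Suc t)
  obtain a b where ab: "mkt \<delta> t = (a, b)" by fastforce
  with Suc have h: "a > 0" "b > 0" "a + b = 1" "a \<in> \<rat>" "b \<in> \<rat>" by auto
  have d: "1 + \<delta> * b > 0" using h dpos by (simp add: add_pos_pos)
  have "a / (1 + \<delta> * b) + (1 + \<delta>) * b / (1 + \<delta> * b) = (a + b + \<delta> * b) / (1 + \<delta> * b)"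
    by (simp add: add_divide_distrib[symmetric] algebra_simps)
  also have "\<dots> = 1" using h d by simp
  finally have s: "a / (1 + \<delta> * b) + (1 + \<delta>) * b / (1 + \<delta> * b) = 1" .
  show ?case using h d s dpos drat
    by (simp add: ab Let_def Rats_add Rats_mult Rats_divide)
qed

lemma mkt_E: "mkt \<delta> t \<in> E_rat"
  using mkt_props[of t] by (auto simp: E_rat_def simplex_open_def)

lemma mkt_snd_less: "snd (mkt \<delta> t) < 1"
  using mkt_props[of t] by linarith

lemma mkt_snd_Suc: "snd (mkt \<delta> (Suc t)) = (1 + \<delta>) * snd (mkt \<delta> t) / (1 + \<delta> * snd (mkt \<delta> t))"
  "fst (mkt \<delta> (Suc t)) = fst (mkt \<delta> t) / (1 + \<delta> * snd (mkt \<delta> t))"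
  by (simp_all add: Let_def)

lemma mkt_mono: "snd (mkt \<delta> t) < snd (mkt \<delta> (Suc t))"
proof -
  define b where "b = snd (mkt \<delta> t)"
  have h: "0 < b" "b < 1" using mkt_props[of t] mkt_snd_less[of t] by (auto simp: b_def)
  have d: "1 + \<delta> * b > 0" using h dpos by (simp add: add_pos_pos)
  have "b * (1 + \<delta> * b) < (1 + \<delta>) * b" using h dpos
    by (simp add: algebra_simps mult_strict_left_mono)
  then have "b < (1 + \<delta>) * b / (1 + \<delta> * b)" using d by (simp add: pos_less_divide_eq)
  moreover have "snd (mkt \<delta> (Suc t)) = (1 + \<delta>) * b / (1 + \<delta> * b)"
    unfolding b_def by (rule mkt_snd_Suc(1))
  ultimately show ?thesis by (simp add: b_def)
qed

lemma mkt_inj: "inj (mkt \<delta>)"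
proof -
  have "strict_mono (\<lambda>t. snd (mkt \<delta> t))"
    by (rule strict_monoI_Suc) (rule mkt_mono)
  then show ?thesis by (metis injI strict_mono_eq)
qed

definition gf :: "nat \<Rightarrow> real \<times> real \<Rightarrow> real" where
  "gf t p = fst p * fst (mkt \<delta> (Suc t)) / fst (mkt \<delta> t) + snd p * snd (mkt \<delta> (Suc t)) / snd (mkt \<delta> t)"

lemma gf_eq: "gf t p = (fst p + (1 + \<delta>) * snd p) / (1 + \<delta> * snd (mkt \<delta> t))"
proof -
  have h: "fst (mkt \<delta> t) > 0" "snd (mkt \<delta> t) > 0" using mkt_props[of t] by auto
  have d: "1 + \<delta> * snd (mkt \<delta> t) > 0" using h dpos by (simp add: add_pos_pos)
  obtain a b where ab: "fst (mkt \<delta> t) = a" "snd (mkt \<delta> t) = b" by blast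
  have "fst p * (a / (1 + \<delta> * b)) / a + snd p * ((1 + \<delta>) * b / (1 + \<delta> * b)) / b
      = (fst p + (1 + \<delta>) * snd p) / (1 + \<delta> * b)"
  proof -
    have a0: "a \<noteq> 0" "b \<noteq> 0" using h ab by auto
    have e1: "fst p * (a / (1 + \<delta> * b)) / a = fst p / (1 + \<delta> * b)" using a0 by simp
    have e2: "snd p * ((1 + \<delta>) * b / (1 + \<delta> * b)) / b = (1 + \<delta>) * snd p / (1 + \<delta> * b)" using a0 by simp
    show ?thesis unfolding e1 e2 by (simp add: add_divide_distrib)
  qed
  then show ?thesis unfolding gf_def mkt_snd_Suc ab .
qed

lemma gf_bounds:
  assumes "p \<in> simplex_closed"
  shows "gf t p > 0" "gf t p \<le> 1 + \<delta>"
proof -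
  have h: "snd (mkt \<delta> t) > 0" using mkt_props[of t] by auto
  have d: "1 + \<delta> * snd (mkt \<delta> t) \<ge> 1" using h dpos by simp
  have p: "fst p \<ge> 0" "snd p \<ge> 0" "fst p + snd p = 1" using assms by (auto simp: simplex_closed_def)
  have n1: "fst p + (1 + \<delta>) * snd p \<ge> 1" proof -
    have "\<delta> * snd p \<ge> 0" using p dpos by simp
    then show ?thesis using p by (simp add: algebra_simps)
  qed
  have n2: "fst p + (1 + \<delta>) * snd p \<le> 1 + \<delta>"
  proof -
    have "\<delta> * snd p \<le> \<delta> * 1" by (rule mult_left_mono) (use p dpos in auto)
    then show ?thesis using p by (simp add: algebra_simps)
  qed
  show "gf t p > 0" using n1 d by (simp add: gf_eq)
  have "(fst p + (1 + \<delta>) * snd p) / (1 + \<delta> * snd (mkt \<delta> t)) \<le> fst p + (1 + \<delta>) * snd p"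
    using divide_left_mono[of 1 "1 + \<delta> * snd (mkt \<delta> t)" "fst p + (1 + \<delta>) * snd p"] n1 d by simp
  then show "gf t p \<le> 1 + \<delta>" using n2 by (simp add: gf_eq)
qed

lemma gf_ratio:
  assumes "p \<in> simplex_closed" "q \<in> simplex_closed"
  shows "gf t p \<le> (1 + \<delta>) * gf t q"
proof -
  have h: "snd (mkt \<delta> t) > 0" using mkt_props[of t] by auto
  have d: "1 + \<delta> * snd (mkt \<delta> t) > 0" using h dpos by (simp add: add_pos_pos)
  have p: "fst p \<ge> 0" "snd p \<ge> 0" "fst p + snd p = 1" using assms by (auto simp: simplex_closed_def)
  have q: "fst q \<ge> 0" "snd q \<ge> 0" "fst q + snd q = 1" using assms by (auto simp: simplex_closed_def)
  have n1: "fst q + (1 + \<delta>) * snd q \<ge> 1" proof -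
    have "\<delta> * snd q \<ge> 0" using q dpos by simp
    then show ?thesis using q by (simp add: algebra_simps)
  qed
  have n2: "fst p + (1 + \<delta>) * snd p \<le> 1 + \<delta>"
  proof -
    have "\<delta> * snd p \<le> \<delta> * 1" by (rule mult_left_mono) (use p dpos in auto)
    then show ?thesis using p by (simp add: algebra_simps)
  qed
  have "fst p + (1 + \<delta>) * snd p \<le> (1 + \<delta>) * (fst q + (1 + \<delta>) * snd q)"
  proof -
    have "(1 + \<delta>) * 1 \<le> (1 + \<delta>) * (fst q + (1 + \<delta>) * snd q)"
      using n1 dpos by (intro mult_left_mono) auto
    then show ?thesis using n2 by (metis mult.right_neutral order_trans)
  qed
  then have "(fst p + (1 + \<delta>) * snd p) / (1 + \<delta> * snd (mkt \<delta> t))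
      \<le> ((1 + \<delta>) * (fst q + (1 + \<delta>) * snd q)) / (1 + \<delta> * snd (mkt \<delta> t))"
    by (rule divide_right_mono) (use d in auto)
  then show ?thesis unfolding gf_eq by simp
qed

lemma relval_Suc: "relval (mkt \<delta>) \<pi> (Suc t) = relval (mkt \<delta>) \<pi> t * gf t (\<pi> (mkt \<delta> t))"
  by (simp only: relval.simps gf_def)

end
context fixes \<delta> :: real assumes dpos: "\<delta> > 0" and drat: "\<delta> \<in> \<rat>"
begin

lemma relval_bounds:
  assumes "\<And>s. \<pi> (mkt \<delta> s) \<in> simplex_closed"
  shows "0 < relval (mkt \<delta>) \<pi> t \<and> relval (mkt \<delta>) \<pi> t \<le> (1 + \<delta>) ^ t"
proof (induction t)
  case 0 then show ?case by simp
next
  case (Suc t)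
  have g: "gf \<delta> t (\<pi> (mkt \<delta> t)) > 0" "gf \<delta> t (\<pi> (mkt \<delta> t)) \<le> 1 + \<delta>"
    using gf_bounds[OF dpos drat assms] by auto
  have "relval (mkt \<delta>) \<pi> t * gf \<delta> t (\<pi> (mkt \<delta> t)) \<le> (1 + \<delta>) ^ t * (1 + \<delta>)"
    using Suc g by (intro mult_mono) auto
  then show ?case using Suc g unfolding relval_Suc[OF dpos drat] by (simp add: mult.commute)
qed

lemma relval_compare:
  assumes "\<And>s. \<pi> (mkt \<delta> s) \<in> simplex_closed" "\<And>s. \<pi>' (mkt \<delta> s) \<in> simplex_closed"
    and "\<And>s. mkt \<delta> s \<notin> K \<Longrightarrow> \<pi> (mkt \<delta> s) = \<pi>' (mkt \<delta> s)"
  shows "relval (mkt \<delta>) \<pi> t \<le> (1 + \<delta>) ^ card {s. s < t \<and> mkt \<delta> s \<in> K} * relval (mkt \<delta>) \<pi>' t"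
proof (induction t)
  case 0 then show ?case by simp
next
  case (Suc t)
  let ?c = "\<lambda>t. card {s. s < t \<and> mkt \<delta> s \<in> K}"
  have pos: "0 < relval (mkt \<delta>) \<pi>' t" using relval_bounds[where \<pi>=\<pi>', OF assms(2)] by blast
  have pos1: "0 < relval (mkt \<delta>) \<pi> t" using relval_bounds[where \<pi>=\<pi>, OF assms(1)] by blast
  have gp: "gf \<delta> t (\<pi> (mkt \<delta> t)) > 0" using gf_bounds[OF dpos drat assms(1)] by auto
  show ?case
  proof (cases "mkt \<delta> t \<in> K")
    case True
    have set: "{s. s < Suc t \<and> mkt \<delta> s \<in> K} = insert t {s. s < t \<and> mkt \<delta> s \<in> K}"
      using True by auto
    have c: "?c (Suc t) = Suc (?c t)" unfolding set by (subst card_insert_disjoint) auto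
    have "relval (mkt \<delta>) \<pi> (Suc t) = relval (mkt \<delta>) \<pi> t * gf \<delta> t (\<pi> (mkt \<delta> t))"
      by (rule relval_Suc[OF dpos drat])
    also have "\<dots> \<le> ((1 + \<delta>) ^ ?c t * relval (mkt \<delta>) \<pi>' t) * ((1 + \<delta>) * gf \<delta> t (\<pi>' (mkt \<delta> t)))"
      using Suc.IH gf_ratio[OF dpos drat assms(1,2)] pos1 gp by (intro mult_mono) auto
    also have "\<dots> = (1 + \<delta>) ^ ?c (Suc t) * relval (mkt \<delta>) \<pi>' (Suc t)"
      unfolding c relval_Suc[OF dpos drat] by (simp add: algebra_simps)
    finally show ?thesis .
  next
    case False
    have set: "{s. s < Suc t \<and> mkt \<delta> s \<in> K} = {s. s < t \<and> mkt \<delta> s \<in> K}"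
      using False less_Suc_eq by auto
    have eq: "\<pi> (mkt \<delta> t) = \<pi>' (mkt \<delta> t)" using assms(3) False by blast
    have "relval (mkt \<delta>) \<pi> (Suc t) = relval (mkt \<delta>) \<pi> t * gf \<delta> t (\<pi> (mkt \<delta> t))"
      by (rule relval_Suc[OF dpos drat])
    also have "\<dots> \<le> ((1 + \<delta>) ^ ?c t * relval (mkt \<delta>) \<pi>' t) * gf \<delta> t (\<pi> (mkt \<delta> t))"
      using Suc.IH gp by (intro mult_right_mono) auto
    also have "\<dots> = (1 + \<delta>) ^ ?c (Suc t) * relval (mkt \<delta>) \<pi>' (Suc t)"
      unfolding set relval_Suc[OF dpos drat] eq by (simp add: algebra_simps)
    finally show ?thesis .
  qed
qed

lemma card_le_K: "finite K \<Longrightarrow> card {s. s < t \<and> mkt \<delta> s \<in> K} \<le> card K"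
proof -
  assume fK: "finite K"
  have "card {s. s < t \<and> mkt \<delta> s \<in> K} = card (mkt \<delta> ` {s. s < t \<and> mkt \<delta> s \<in> K})"
    using mkt_inj[OF dpos drat] by (simp add: card_image inj_on_subset)
  also have "\<dots> \<le> card K" using fK by (intro card_mono) auto
  finally show ?thesis .
qed

lemma relval_compare2:
  assumes "finite K" "\<And>s. \<pi> (mkt \<delta> s) \<in> simplex_closed" "\<And>s. \<pi>' (mkt \<delta> s) \<in> simplex_closed"
    and "\<And>s. mkt \<delta> s \<notin> K \<Longrightarrow> \<pi> (mkt \<delta> s) = \<pi>' (mkt \<delta> s)"
  shows "relval (mkt \<delta>) \<pi> t \<le> (1 + \<delta>) ^ card K * relval (mkt \<delta>) \<pi>' t"
proof -
  have "relval (mkt \<delta>) \<pi> t \<le> (1 + \<delta>) ^ card {s. s < t \<and> mkt \<delta> s \<in> K} * relval (mkt \<delta>) \<pi>' t"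
    by (rule relval_compare[where \<pi>=\<pi> and \<pi>'=\<pi>' and K=K, OF assms(2-4)])
  also have "\<dots> \<le> (1 + \<delta>) ^ card K * relval (mkt \<delta>) \<pi>' t"
  proof -
    have r0: "0 \<le> relval (mkt \<delta>) \<pi>' t"
      using relval_bounds[where \<pi>=\<pi>', OF assms(3), of t] by linarith
    show ?thesis using r0 card_le_K[OF assms(1)] dpos
      by (intro mult_right_mono power_increasing) auto
  qed
  finally show ?thesis .
qed

end


context fixes \<delta> :: real assumes dpos: "\<delta> > 0" and drat: "\<delta> \<in> \<rat>"
begin
lemma relval_meas:
  assumes "\<And>s. (\<lambda>\<pi>. \<pi> (mkt \<delta> s)) \<in> measurable N borel"
  shows "(\<lambda>\<pi>. relval (mkt \<delta>) \<pi> t) \<in> borel_measurable N"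
proof (induction t)
  case 0 then show ?case by simp
next
  case (Suc t)
  have m: "(\<lambda>\<pi>. \<pi> (mkt \<delta> t)) \<in> measurable N borel" by (rule assms)
  have geq: "gf \<delta> t = (\<lambda>p. (fst p + (1 + \<delta>) * snd p) * inverse (1 + \<delta> * snd (mkt \<delta> t)))"
    by (rule ext) (simp add: gf_eq[OF dpos drat] divide_inverse)
  have c: "continuous_on UNIV (gf \<delta> t)" unfolding geq by (intro continuous_intros)
  have "(\<lambda>\<pi>. gf \<delta> t (\<pi> (mkt \<delta> t))) \<in> borel_measurable N"
    using measurable_compose[OF m borel_measurable_continuous_onI[OF c]] by simp
  then show ?case using Suc unfolding relval_Suc[OF dpos drat] by (rule borel_measurable_times[rotated])
qed

end
lemma comp_meas_unif: "i \<in> E_rat \<Longrightarrow> (\<lambda>\<pi>. \<pi> i) \<in> measurable nu0 unif_simplex"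
  unfolding nu0_def by (rule measurable_component_singleton)

lemma comp_meas: "i \<in> E_rat \<Longrightarrow> (\<lambda>\<pi>. \<pi> i) \<in> measurable nu0 borel"
proof -
  assume i: "i \<in> E_rat"
  have "(\<lambda>\<pi>. \<pi> i) \<in> measurable nu0 (restrict_space borel simplex_closed)"
    using comp_meas_unif[OF i] measurable_cong_sets[OF refl sets_unif] by blast
  then show ?thesis by (simp add: measurable_restrict_space2_iff)
qed

context fixes \<delta> :: real assumes dpos: "\<delta> > 0" and drat: "\<delta> \<in> \<rat>"
begin

lemma space_mkt: "\<pi> \<in> space nu0 \<Longrightarrow> \<pi> (mkt \<delta> s) \<in> simplex_closed"
  using mkt_E[OF dpos drat] by (auto simp: space_nu0)

lemma relval_meas_nu0: "(\<lambda>\<pi>. relval (mkt \<delta>) \<pi> t) \<in> borel_measurable nu0"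
  by (rule relval_meas[OF dpos drat comp_meas[OF mkt_E[OF dpos drat]]])

lemma relval_int: "integrable nu0 (\<lambda>\<pi>. relval (mkt \<delta>) \<pi> t)"
proof -
  interpret prob_space nu0 by (rule prob_nu0)
  show ?thesis
  proof (rule integrable_const_bound[where B="(1+\<delta>)^t"])
    show "AE x in nu0. norm (relval (mkt \<delta>) x t) \<le> (1 + \<delta>) ^ t"
    proof (rule AE_I2)
      fix x assume x: "x \<in> space nu0"
      have "\<And>s. x (mkt \<delta> s) \<in> simplex_closed" using x by (rule space_mkt)
      from relval_bounds[where \<pi>=x, OF dpos drat this, of t] show "norm (relval (mkt \<delta>) x t) \<le> (1 + \<delta>) ^ t" by simp
    qed
  qed (rule relval_meas_nu0)
qed

lemma gf_lower: assumes "p \<in> simplex_closed" shows "inverse (1 + \<delta>) \<le> gf \<delta> t p"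
proof -
  have h: "snd (mkt \<delta> t) > 0" "snd (mkt \<delta> t) < 1" using mkt_props[OF dpos drat, of t] mkt_snd_less[OF dpos drat, of t] by auto
  have d: "1 + \<delta> * snd (mkt \<delta> t) > 0" "1 + \<delta> * snd (mkt \<delta> t) \<le> 1 + \<delta>"
    using h dpos by (auto simp: add_pos_pos mult_left_le)
  have p: "fst p \<ge> 0" "snd p \<ge> 0" "fst p + snd p = 1" using assms by (auto simp: simplex_closed_def)
  have n1: "fst p + (1 + \<delta>) * snd p \<ge> 1"
  proof -
    have "\<delta> * snd p \<ge> 0" using p dpos by simp
    then show ?thesis using p by (simp add: algebra_simps)
  qed
  have "inverse (1 + \<delta>) \<le> 1 / (1 + \<delta> * snd (mkt \<delta> t))"
    using d by (simp add: inverse_eq_divide frac_le)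
  also have "\<dots> \<le> (fst p + (1 + \<delta>) * snd p) / (1 + \<delta> * snd (mkt \<delta> t))"
    using n1 d by (intro divide_right_mono) auto
  finally show ?thesis by (simp add: gf_eq[OF dpos drat])
qed

lemma relval_lower:
  assumes "\<And>s. \<pi> (mkt \<delta> s) \<in> simplex_closed"
  shows "(inverse (1 + \<delta>)) ^ t \<le> relval (mkt \<delta>) \<pi> t"
proof (induction t)
  case 0 then show ?case by simp
next
  case (Suc t)
  have "(inverse (1 + \<delta>)) ^ t * inverse (1 + \<delta>) \<le> relval (mkt \<delta>) \<pi> t * gf \<delta> t (\<pi> (mkt \<delta> t))"
  proof (rule mult_mono)
    show "0 \<le> relval (mkt \<delta>) \<pi> t" using relval_bounds[where \<pi>=\<pi>, OF dpos drat assms, of t] by linarith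
  qed (use Suc gf_lower[OF assms] dpos in auto)
  then show ?case unfolding relval_Suc[OF dpos drat] by (simp add: mult.commute)
qed

lemma relval_int_pos: "0 < (LINT \<pi>|nu0. relval (mkt \<delta>) \<pi> t)"
proof -
  interpret prob_space nu0 by (rule prob_nu0)
  have "0 < (LINT \<pi>|nu0. (inverse (1 + \<delta>)) ^ t)" using dpos by (simp add: prob_space)
  also have "\<dots> \<le> (LINT \<pi>|nu0. relval (mkt \<delta>) \<pi> t)"
    by (rule integral_mono[OF _ relval_int]) (auto intro!: relval_lower space_mkt)
  finally show ?thesis .
qed

end


definition Bas :: "(real \<times> real) set set" where
  "Bas = (SOME B. countable B \<and> topological_basis B)"

lemma Bas: "countable Bas" "topological_basis Bas"
  using someI_ex[OF ex_countable_basis] unfolding Bas_def by blast+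

definition cylW :: "((real \<times> real) \<times> (real \<times> real) set) set \<Rightarrow> real \<times> real \<Rightarrow> (real \<times> real) set" where
  "cylW A i = simplex_closed \<inter> \<Inter>{b. (i, b) \<in> A}"

definition cyl :: "((real \<times> real) \<times> (real \<times> real) set) set \<Rightarrow> ((real \<times> real) \<Rightarrow> (real \<times> real)) set" where
  "cyl A = PiE E_rat (cylW A)"

lemma topspace_Theta: "topspace Theta_top = PiE E_rat (\<lambda>_. simplex_closed)"
  by (simp add: Theta_top_def)

lemma cyl_basic:
  assumes G: "openin Theta_top G" and x: "x \<in> G"
  shows "\<exists>A. finite A \<and> A \<subseteq> E_rat \<times> Bas \<and> x \<in> cyl A \<and> cyl A \<subseteq> G"
proof -
  obtain U where U: "finite {i \<in> E_rat. U i \<noteq> simplex_closed}"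
      "\<forall>i \<in> E_rat. openin (subtopology euclidean simplex_closed) (U i)"
      "x \<in> PiE E_rat U" "PiE E_rat U \<subseteq> G"
    using G x unfolding Theta_top_def openin_product_topology_alt by auto
  define K where "K = {i \<in> E_rat. U i \<noteq> simplex_closed}"
  have xS: "x i \<in> simplex_closed" if "i \<in> E_rat" for i
    using U(2,3) that openin_subset by fastforce
  have "\<exists>b\<in>Bas. x i \<in> b \<and> simplex_closed \<inter> b \<subseteq> U i" if i: "i \<in> E_rat" for i
  proof -
    obtain V where V: "open V" "U i = V \<inter> simplex_closed"
      using U(2) i by (auto simp: openin_subtopology)
    have "x i \<in> V" using U(3) V i by auto
    then obtain b where "b \<in> Bas" "x i \<in> b" "b \<subseteq> V"
      using topological_basisE[OF Bas(2) V(1)] by blast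
    then show ?thesis using V by blast
  qed
  then have "\<forall>i\<in>E_rat. \<exists>b. b \<in> Bas \<and> x i \<in> b \<and> simplex_closed \<inter> b \<subseteq> U i" by blast
  from bchoice[OF this] obtain bf where bf0: "\<forall>i\<in>E_rat. bf i \<in> Bas \<and> x i \<in> bf i \<and> simplex_closed \<inter> bf i \<subseteq> U i"
    by blast
  have bf: "bf i \<in> Bas \<and> x i \<in> bf i \<and> simplex_closed \<inter> bf i \<subseteq> U i" if "i \<in> E_rat" for i
    using bf0 that by blast
  define A where "A = (\<lambda>i. (i, bf i)) ` K"
  have fin: "finite A" using U(1) unfolding A_def K_def by simp
  have sub: "A \<subseteq> E_rat \<times> Bas" using bf unfolding A_def K_def by auto
  have W: "cylW A i = (if i \<in> K then simplex_closed \<inter> bf i else simplex_closed)" for i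
    unfolding cylW_def A_def by auto
  have "x \<in> cyl A"
    unfolding cyl_def PiE_iff
  proof (intro conjI ballI)
    fix i assume i: "i \<in> E_rat"
    show "x i \<in> cylW A i"
      using xS[OF i] bf[OF i] unfolding W by simp
  next
    show "x \<in> extensional E_rat" using U(3) by (simp add: PiE_iff)
  qed
  moreover have "cyl A \<subseteq> PiE E_rat U"
  proof
    fix y assume y: "y \<in> cyl A"
    show "y \<in> PiE E_rat U"
    proof (unfold PiE_iff, intro conjI ballI)
      fix i assume i: "i \<in> E_rat"
      show "y i \<in> U i"
      proof (cases "i \<in> K")
        case True
        have "y i \<in> simplex_closed \<inter> bf i" using y i True unfolding cyl_def W by (auto simp: PiE_iff)
        then show ?thesis using bf[OF i] by blast
      next
        case False then have "U i = simplex_closed" using i unfolding K_def by auto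
        moreover have "y i \<in> simplex_closed" using y i False unfolding cyl_def W by (auto simp: PiE_iff)
        ultimately show ?thesis by simp
      qed
    next
      show "y \<in> extensional E_rat" using y unfolding cyl_def by (auto simp: PiE_iff)
    qed
  qed
  ultimately have "x \<in> cyl A" "cyl A \<subseteq> G" using U(4) by auto
  then show ?thesis using fin sub by (intro exI[of _ A]) simp
qed

lemma cylW_sets:
  assumes "finite A" "A \<subseteq> E_rat \<times> Bas"
  shows "cylW A i \<in> sets unif_simplex"
proof -
  have fin: "finite {b. (i, b) \<in> A}"
    using assms(1) by (rule finite_surj[where f=snd]) force
  have "open (\<Inter>{b. (i, b) \<in> A})"
    using fin assms(2) topological_basis_open[OF Bas(2)] by (intro open_Inter) auto
  then have "\<Inter>{b. (i, b) \<in> A} \<in> sets borel" by simp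
  then show ?thesis unfolding sets_unif cylW_def sets_restrict_space by auto
qed

lemma cyl_emb:
  assumes "finite A" "A \<subseteq> E_rat \<times> Bas"
  shows "cyl A = prod_emb E_rat (\<lambda>_. unif_simplex) (fst ` A) (PiE (fst ` A) (cylW A))"
proof -
  have "prod_emb E_rat (\<lambda>_. unif_simplex) (fst ` A) (PiE (fst ` A) (cylW A))
     = PiE E_rat (\<lambda>i. if i \<in> fst ` A then cylW A i else space unif_simplex)"
  proof (rule prod_emb_PiE)
    show "fst ` A \<subseteq> E_rat" using assms(2) by auto
  qed (auto simp: space_unif cylW_def)
  also have "\<dots> = cyl A" unfolding cyl_def
  proof (rule PiE_cong)
    fix i assume "i \<in> E_rat"
    show "(if i \<in> fst ` A then cylW A i else space unif_simplex) = cylW A i"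
    proof (cases "i \<in> fst ` A")
      case False
      then have "{b. (i, b) \<in> A} = {}" by force
      then show ?thesis using False by (simp add: space_unif cylW_def)
    qed simp
  qed
  finally show ?thesis by simp
qed

lemma cyl_sets:
  assumes "finite A" "A \<subseteq> E_rat \<times> Bas"
  shows "cyl A \<in> sets nu0"
  unfolding cyl_emb[OF assms] nu0_def
proof (rule sets_PiM_I)
  show "finite (fst ` A)" using assms(1) by simp
  show "fst ` A \<subseteq> E_rat" using assms(2) by auto
  show "\<forall>i\<in>fst ` A. cylW A i \<in> sets unif_simplex" using cylW_sets[OF assms] by blast
qed

lemma countable_E: "countable E_rat"
proof -
  have "E_rat \<subseteq> \<rat> \<times> \<rat>" by (auto simp: E_rat_def)
  moreover have "countable (\<rat> \<times> (\<rat>::real set))" by (intro countable_SIGMA countable_rat)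
  ultimately show ?thesis by (rule countable_subset)
qed

lemma open_sets:
  assumes G: "openin Theta_top G"
  shows "G \<in> sets nu0"
proof -
  let ?F = "{A. finite A \<and> A \<subseteq> E_rat \<times> Bas}"
  have cF: "countable ?F"
    by (rule countable_Collect_finite_subset) (simp add: countable_E Bas(1))
  have "G = (\<Union>A\<in>{A \<in> ?F. cyl A \<subseteq> G}. cyl A)"
  proof (rule antisym)
    show "G \<subseteq> (\<Union>A\<in>{A \<in> ?F. cyl A \<subseteq> G}. cyl A)"
    proof
      fix x assume "x \<in> G"
      from cyl_basic[OF G this] obtain A where "finite A" "A \<subseteq> E_rat \<times> Bas" "x \<in> cyl A" "cyl A \<subseteq> G"
        by blast
      then show "x \<in> (\<Union>A\<in>{A \<in> ?F. cyl A \<subseteq> G}. cyl A)" by blast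
    qed
  qed auto
  also have "\<dots> \<in> sets nu0"
  proof (rule sets.countable_UN'')
    show "countable {A \<in> ?F. cyl A \<subseteq> G}" using cF by (rule countable_subset[rotated]) auto
  next
    fix A assume "A \<in> {A \<in> ?F. cyl A \<subseteq> G}"
    then show "cyl A \<in> sets nu0" using cyl_sets by simp
  qed
  finally show ?thesis .
qed




lemma unif_pos:
  assumes V: "open V" and p: "p \<in> simplex_closed \<inter> V"
  shows "0 < emeasure unif_simplex (simplex_closed \<inter> V)"
proof -
  define f where "f = (\<lambda>x::real. (x, 1 - x))"
  define a where "a = fst p"
  have pa: "p = f a" "0 \<le> a" "a \<le> 1" using p unfolding f_def a_def simplex_closed_def
    by (auto simp: prod_eq_iff)
  have "open (f -` V)" unfolding f_def by (intro open_vimage V continuous_intros)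
  moreover have "a \<in> f -` V" using pa p by auto
  ultimately obtain e where e: "e > 0" "ball a e \<subseteq> f -` V"
    using open_contains_ball by blast
  define d where "d = min (e / 2) (1 / 2)"
  have d: "d > 0" "d < e" "d \<le> 1/2" using e by (auto simp: d_def)
  define c where "c = (if a \<le> 1/2 then a else a - d)"
  have I: "{c..c+d} \<subseteq> f -` (simplex_closed \<inter> V) \<inter> {0..1}"
  proof
    fix y assume y: "y \<in> {c..c+d}"
    have y01: "0 \<le> y" "y \<le> 1" using y pa d by (auto simp: c_def split: if_splits)
    have "dist y a < e" using y d by (auto simp: c_def dist_real_def split: if_splits)
    then have "f y \<in> V" using e by (auto simp: dist_commute)
    moreover have "f y \<in> simplex_closed" using y01 by (simp add: f_def simplex_closed_def)
    ultimately show "y \<in> f -` (simplex_closed \<inter> V) \<inter> {0..1}" using y01 by simp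
  qed
  have meas: "f \<in> measurable (restrict_space lborel {0..1}) (restrict_space borel simplex_closed)"
    unfolding f_def by (rule unif_meas)
  have SV: "simplex_closed \<inter> V \<in> sets (restrict_space borel simplex_closed)"
    using V by (auto simp: sets_restrict_space)
  have "emeasure unif_simplex (simplex_closed \<inter> V)
      = emeasure (restrict_space lborel {0..1}) (f -` (simplex_closed \<inter> V) \<inter> space (restrict_space lborel {0..1::real}))"
    unfolding unif_simplex_def f_def[symmetric] by (rule emeasure_distr[OF meas SV])
  also have "space (restrict_space lborel {0..1::real}) = {0..1}" by (simp add: space_restrict_space)
  finally have eq: "emeasure unif_simplex (simplex_closed \<inter> V) = emeasure (restrict_space lborel {0..1}) (f -` (simplex_closed \<inter> V) \<inter> {0..1})" .
  have Bs: "f -` (simplex_closed \<inter> V) \<inter> {0..1} \<in> sets (restrict_space lborel {0..1::real})"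
    using measurable_sets[OF meas SV] by (simp add: space_restrict_space)
  have "ennreal d = emeasure (restrict_space lborel {0..1::real}) {c..c+d}"
    using I d by (subst emeasure_restrict_space) auto
  also have "\<dots> \<le> emeasure (restrict_space lborel {0..1}) (f -` (simplex_closed \<inter> V) \<inter> {0..1})"
    by (rule emeasure_mono[OF I Bs])
  finally show ?thesis using eq d by (metis ennreal_eq_0_iff leD not_gr_zero order_less_le)
qed


lemma comp_meas_PiM: "i \<in> I \<Longrightarrow> (\<lambda>\<rho>. \<rho> i) \<in> measurable (PiM I (\<lambda>_. unif_simplex)) borel"
proof -
  assume i: "i \<in> I"
  have "(\<lambda>\<rho>. \<rho> i) \<in> measurable (PiM I (\<lambda>_. unif_simplex)) (restrict_space borel simplex_closed)"
    using measurable_component_singleton[OF i, of "\<lambda>_. unif_simplex"] measurable_cong_sets[OF refl sets_unif] by blast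
  then show ?thesis by (simp add: measurable_restrict_space2_iff)
qed

context fixes \<delta> :: real assumes dpos: "\<delta> > 0" and drat: "\<delta> \<in> \<rat>"
begin

lemma relval_meas':
  assumes "\<And>s. (\<lambda>x. F x (mkt \<delta> s)) \<in> measurable N borel"
  shows "(\<lambda>x. relval (mkt \<delta>) (F x) t) \<in> borel_measurable N"
proof (induction t)
  case 0 then show ?case by simp
next
  case (Suc t)
  have m: "(\<lambda>x. F x (mkt \<delta> t)) \<in> measurable N borel" by (rule assms)
  have geq: "gf \<delta> t = (\<lambda>p. (fst p + (1 + \<delta>) * snd p) * inverse (1 + \<delta> * snd (mkt \<delta> t)))"
    by (rule ext) (simp add: gf_eq[OF dpos drat] divide_inverse)
  have c: "continuous_on UNIV (gf \<delta> t)" unfolding geq by (intro continuous_intros)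
  have "(\<lambda>x. gf \<delta> t (F x (mkt \<delta> t))) \<in> borel_measurable N"
    using measurable_compose[OF m borel_measurable_continuous_onI[OF c]] by simp
  then show ?case using Suc unfolding relval_Suc[OF dpos drat] by (rule borel_measurable_times[rotated])
qed

lemma cyl_bound:
  assumes A: "finite A" "A \<subseteq> E_rat \<times> Bas"
  defines "c \<equiv> (1 + \<delta>) ^ card (fst ` A)"
  shows "measure nu0 (cyl A) / c\<^sup>2 * (LINT \<pi>|nu0. relval (mkt \<delta>) \<pi> t)
     \<le> (LINT \<pi>:cyl A|nu0. relval (mkt \<delta>) \<pi> t)"
proof -
  interpret prob_space nu0 by (rule prob_nu0)
  define K where "K = fst ` A"
  have K: "finite K" "K \<subseteq> E_rat" using A unfolding K_def by auto
  define M where "M = (\<lambda>_::real\<times>real. unif_simplex)"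
  define p0 where "p0 = ((1::real), (0::real))"
  have p0: "p0 \<in> simplex_closed" by (simp add: p0_def simplex_closed_def)
  define X where "X i \<pi> = (if i \<in> E_rat then \<pi> i else p0)" for i and \<pi> :: "real \<times> real \<Rightarrow> real \<times> real"
  have Enon: "E_rat \<noteq> {}"
  proof -
    have "(1/2, 1/2) \<in> E_rat" by (simp add: E_rat_def simplex_open_def)
    then show ?thesis by blast
  qed
  have rv: "random_variable (M i) (X i)" for i
  proof (cases "i \<in> E_rat")
    case True then show ?thesis unfolding X_def M_def using comp_meas_unif[OF True] by simp
  next
    case False then show ?thesis unfolding X_def M_def using p0 by (simp add: space_unif)
  qed
  have ind: "indep_vars M X E_rat"
  proof (subst indep_vars_iff_distr_eq_PiM[OF Enon rv])
    have "distr nu0 (PiM E_rat M) (\<lambda>x. \<lambda>i\<in>E_rat. X i x) = distr nu0 (PiM E_rat M) (\<lambda>x. x)"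
      by (rule distr_cong) (auto simp: space_nu0 X_def PiE_def extensional_def restrict_def fun_eq_iff)
    also have "\<dots> = nu0" by (rule distr_id2) (simp add: nu0_def M_def)
    also have "\<dots> = PiM E_rat (\<lambda>i. distr nu0 (M i) (X i))"
      unfolding nu0_def
    proof (rule PiM_cong)
      fix i assume i: "i \<in> E_rat"
      have "distr (PiM E_rat (\<lambda>_. unif_simplex)) (M i) (X i) = distr (PiM E_rat (\<lambda>_. unif_simplex)) unif_simplex (\<lambda>\<pi>. \<pi> i)"
        by (rule distr_cong) (auto simp: M_def X_def i)
      also have "\<dots> = unif_simplex" by (rule PP.PiM_component[OF i])
      finally show "unif_simplex = distr (PiM E_rat (\<lambda>_. unif_simplex)) (M i) (X i)" by simp
    qed simp
    finally show "distr nu0 (PiM E_rat M) (\<lambda>x. \<lambda>i\<in>E_rat. X i x) = PiM E_rat (\<lambda>i. distr nu0 (M i) (X i))" .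
  qed
  have ind2: "indep_var (PiM K M) (\<lambda>\<omega>. restrict (\<lambda>i. X i \<omega>) K) (PiM (E_rat - K) M) (\<lambda>\<omega>. restrict (\<lambda>i. X i \<omega>) (E_rat - K))"
    by (rule indep_var_restrict[OF ind]) (use K in auto)
  define sig where "sig \<rho> = (\<lambda>i. if i \<in> K then p0 else \<rho> i)" for \<rho> :: "real \<times> real \<Rightarrow> real \<times> real"
  define Y1 where "Y1 = (indicator (PiE K (cylW A)) :: _ \<Rightarrow> real)"
  define Y2 where "Y2 \<rho> = relval (mkt \<delta>) (sig \<rho>) t" for \<rho>
  have Y1m: "Y1 \<in> borel_measurable (PiM K M)"
    unfolding Y1_def M_def using K cylW_sets[OF A] by (intro borel_measurable_indicator sets_PiM_I_finite) auto
  have Y2m: "Y2 \<in> borel_measurable (PiM (E_rat - K) M)"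
    unfolding Y2_def
  proof (rule relval_meas')
    fix s
    show "(\<lambda>x. sig x (mkt \<delta> s)) \<in> borel_measurable (PiM (E_rat - K) M)"
    proof (cases "mkt \<delta> s \<in> K")
      case True then show ?thesis by (simp add: sig_def)
    next
      case False
      then have "mkt \<delta> s \<in> E_rat - K" using mkt_E[OF dpos drat] by auto
      then show ?thesis using False unfolding sig_def M_def by (simp add: comp_meas_PiM)
    qed
  qed
  have ind3: "indep_var borel (Y1 \<circ> (\<lambda>\<omega>. restrict (\<lambda>i. X i \<omega>) K)) borel (Y2 \<circ> (\<lambda>\<omega>. restrict (\<lambda>i. X i \<omega>) (E_rat - K)))"
    by (rule indep_var_compose[OF ind2 Y1m Y2m])
  define Z1 where "Z1 = Y1 \<circ> (\<lambda>\<omega>. restrict (\<lambda>i. X i \<omega>) K)"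
  define Z2 where "Z2 = Y2 \<circ> (\<lambda>\<omega>. restrict (\<lambda>i. X i \<omega>) (E_rat - K))"
  have R1m: "(\<lambda>\<omega>. restrict (\<lambda>i. X i \<omega>) K) \<in> measurable nu0 (PiM K M)"
    using rv by (intro measurable_restrict) auto
  have R2m: "(\<lambda>\<omega>. restrict (\<lambda>i. X i \<omega>) (E_rat - K)) \<in> measurable nu0 (PiM (E_rat - K) M)"
    using rv by (intro measurable_restrict) auto
  have Z1m: "Z1 \<in> borel_measurable nu0" unfolding Z1_def by (rule measurable_comp[OF R1m Y1m])
  have Z2m: "Z2 \<in> borel_measurable nu0" unfolding Z2_def by (rule measurable_comp[OF R2m Y2m])
  define V where "V \<pi> = relval (mkt \<delta>) \<pi> t" for \<pi>
  have sigS: "sig (restrict (\<lambda>i. X i \<pi>) (E_rat - K)) (mkt \<delta> s) \<in> simplex_closed" if "\<pi> \<in> space nu0" for \<pi> s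
    using p0 space_mkt[OF dpos drat that, of s] mkt_E[OF dpos drat, of s]
    by (auto simp: sig_def X_def)
  have sigE: "sig (restrict (\<lambda>i. X i \<pi>) (E_rat - K)) (mkt \<delta> s) = \<pi> (mkt \<delta> s)" if "mkt \<delta> s \<notin> K" for \<pi> s
    using that mkt_E[OF dpos drat, of s] by (auto simp: sig_def X_def)
  have Z2V: "Z2 \<pi> \<le> c * V \<pi>" if "\<pi> \<in> space nu0" for \<pi>
    unfolding Z2_def Y2_def V_def c_def K_def[symmetric] o_def
    by (rule relval_compare2[OF dpos drat K(1)]) (use sigS[OF that] space_mkt[OF dpos drat that] sigE in auto)
  have VZ2: "V \<pi> \<le> c * Z2 \<pi>" if "\<pi> \<in> space nu0" for \<pi>
    unfolding Z2_def Y2_def V_def c_def K_def[symmetric] o_def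
    by (rule relval_compare2[OF dpos drat K(1)]) (use sigS[OF that] space_mkt[OF dpos drat that] sigE in auto)
  have Z1C: "Z1 \<pi> = indicator (cyl A) \<pi>" if "\<pi> \<in> space nu0" for \<pi>
  proof -
    have "\<pi> \<in> cyl A \<longleftrightarrow> (\<forall>i\<in>K. \<pi> i \<in> cylW A i)"
      using that K(2) unfolding cyl_def space_nu0 K_def
      by (auto simp: PiE_iff cylW_def)
    moreover have "restrict (\<lambda>i. X i \<pi>) K \<in> PiE K (cylW A) \<longleftrightarrow> (\<forall>i\<in>K. \<pi> i \<in> cylW A i)"
      using K(2) by (auto simp: PiE_iff X_def)
    ultimately show ?thesis unfolding Z1_def Y1_def o_def indicator_def by simp
  qed
  have cpos: "c > 0" unfolding c_def using dpos by simp
  have Z2nn: "0 \<le> Z2 \<pi>" and Z2b: "Z2 \<pi> \<le> (1 + \<delta>) ^ t" if "\<pi> \<in> space nu0" for \<pi>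
    using relval_bounds[where \<pi>="sig (restrict (\<lambda>i. X i \<pi>) (E_rat - K))", OF dpos drat sigS[OF that], of t]
    unfolding Z2_def Y2_def o_def by auto
  have Z2i: "integrable nu0 Z2"
  proof (rule integrable_const_bound[where B="(1+\<delta>)^t"])
    show "AE x in nu0. norm (Z2 x) \<le> (1 + \<delta>) ^ t"
      using Z2nn Z2b by (intro AE_I2) auto
  qed (rule Z2m)
  have Z1i: "integrable nu0 Z1"
  proof (rule integrable_const_bound[where B="1"])
    show "AE x in nu0. norm (Z1 x) \<le> 1"
      using Z1C by (intro AE_I2) (auto simp: indicator_def)
  qed (rule Z1m)
  have Vi: "integrable nu0 V" unfolding V_def by (rule relval_int[OF dpos drat])
  have Cs: "cyl A \<in> sets nu0" by (rule cyl_sets[OF A])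
  have prodeq: "(\<integral>\<pi>. Z1 \<pi> * Z2 \<pi> \<partial>nu0) = (\<integral>\<pi>. Z1 \<pi> \<partial>nu0) * (\<integral>\<pi>. Z2 \<pi> \<partial>nu0)"
    by (rule indep_var_lebesgue_integral[OF ind3[folded Z1_def Z2_def] Z1i Z2i])
  have prodi: "integrable nu0 (\<lambda>\<pi>. Z1 \<pi> * Z2 \<pi>)"
    by (rule indep_var_integrable[OF ind3[folded Z1_def Z2_def] Z1i Z2i])
  have Z1int: "(\<integral>\<pi>. Z1 \<pi> \<partial>nu0) = measure nu0 (cyl A)"
  proof -
    have "(\<integral>\<pi>. Z1 \<pi> \<partial>nu0) = (\<integral>\<pi>. indicator (cyl A) \<pi> \<partial>nu0)"
      by (rule Bochner_Integration.integral_cong[OF refl Z1C])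
    also have "\<dots> = measure nu0 (cyl A)" using Cs by (simp add: emeasure_eq_measure)
    finally show ?thesis .
  qed
  have iCV: "integrable nu0 (\<lambda>\<pi>. indicator (cyl A) \<pi> * V \<pi>)"
    using integrable_mult_indicator[OF Cs Vi] by simp
  have step1: "(\<integral>\<pi>. Z1 \<pi> * Z2 \<pi> \<partial>nu0) / c \<le> (\<integral>\<pi>. indicator (cyl A) \<pi> * V \<pi> \<partial>nu0)"
  proof -
    have "(\<integral>\<pi>. Z1 \<pi> * Z2 \<pi> \<partial>nu0) / c = (\<integral>\<pi>. Z1 \<pi> * Z2 \<pi> / c \<partial>nu0)" by simp
    also have "\<dots> \<le> (\<integral>\<pi>. indicator (cyl A) \<pi> * V \<pi> \<partial>nu0)"
    proof (rule integral_mono)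
      show "integrable nu0 (\<lambda>\<pi>. Z1 \<pi> * Z2 \<pi> / c)" using prodi by simp
      show "integrable nu0 (\<lambda>\<pi>. indicator (cyl A) \<pi> * V \<pi>)" by (rule iCV)
      fix \<pi> assume p: "\<pi> \<in> space nu0"
      have "Z2 \<pi> / c \<le> V \<pi>" using Z2V[OF p] cpos by (simp add: divide_le_eq mult.commute)
      then show "Z1 \<pi> * Z2 \<pi> / c \<le> indicator (cyl A) \<pi> * V \<pi>"
        unfolding Z1C[OF p] by (auto simp: indicator_def)
    qed
    finally show ?thesis .
  qed
  have step2: "(\<integral>\<pi>. V \<pi> \<partial>nu0) / c \<le> (\<integral>\<pi>. Z2 \<pi> \<partial>nu0)"
  proof -
    have "(\<integral>\<pi>. V \<pi> \<partial>nu0) / c = (\<integral>\<pi>. V \<pi> / c \<partial>nu0)" by simp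
    also have "\<dots> \<le> (\<integral>\<pi>. Z2 \<pi> \<partial>nu0)"
    proof (rule integral_mono)
      show "integrable nu0 (\<lambda>\<pi>. V \<pi> / c)" using Vi by simp
      show "integrable nu0 Z2" by (rule Z2i)
      fix \<pi> assume p: "\<pi> \<in> space nu0"
      show "V \<pi> / c \<le> Z2 \<pi>" using VZ2[OF p] cpos by (simp add: divide_le_eq mult.commute)
    qed
    finally show ?thesis .
  qed
  have "measure nu0 (cyl A) / c\<^sup>2 * (\<integral>\<pi>. V \<pi> \<partial>nu0) = measure nu0 (cyl A) * ((\<integral>\<pi>. V \<pi> \<partial>nu0) / c) / c"
    by (simp add: power2_eq_square)
  also have "\<dots> \<le> measure nu0 (cyl A) * (\<integral>\<pi>. Z2 \<pi> \<partial>nu0) / c"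
    using step2 cpos by (intro divide_right_mono mult_left_mono) auto
  also have "\<dots> = (\<integral>\<pi>. Z1 \<pi> * Z2 \<pi> \<partial>nu0) / c" by (simp add: prodeq Z1int)
  also have "\<dots> \<le> (\<integral>\<pi>. indicator (cyl A) \<pi> * V \<pi> \<partial>nu0)" by (rule step1)
  finally show ?thesis unfolding V_def set_lebesgue_integral_def by simp
qed

end



lemma cyl_pos:
  assumes A: "finite A" "A \<subseteq> E_rat \<times> Bas" and x: "x \<in> cyl A"
  shows "measure nu0 (cyl A) > 0"
proof -
  have K: "fst ` A \<subseteq> E_rat" "finite (fst ` A)" using A by auto
  have "measure nu0 (cyl A) = (\<Prod>i\<in>fst ` A. measure unif_simplex (cylW A i))"
    unfolding cyl_emb[OF A] nu0_def
    by (rule PP.measure_PiM_emb[OF K(1) K(2)]) (rule cylW_sets[OF A])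
  also have "\<dots> > 0"
  proof -
  have fm: "finite_measure unif_simplex" using prob_unif by (simp add: prob_space_def)
  have "0 < (\<Prod>i\<in>fst ` A. measure unif_simplex (cylW A i))"
  proof (rule prod_pos)
    fix i assume i: "i \<in> fst ` A"
    have fin: "finite {b. (i, b) \<in> A}"
      using A(1) by (rule finite_surj[where f=snd]) force
    have op: "open (\<Inter>{b. (i, b) \<in> A})"
      using fin A(2) topological_basis_open[OF Bas(2)] by (intro open_Inter) auto
    have "x i \<in> cylW A i" using x i K(1) unfolding cyl_def by (auto simp: PiE_iff)
    then have "0 < emeasure unif_simplex (simplex_closed \<inter> \<Inter>{b. (i, b) \<in> A})"
      using unif_pos[OF op] unfolding cylW_def by blast
    then show "0 < measure unif_simplex (cylW A i)"
      unfolding cylW_def using finite_measure.emeasure_eq_measure[OF fm] by simp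
  qed
  then show ?thesis by simp
  qed
  finally show ?thesis .
qed

context fixes \<delta> :: real assumes dpos: "\<delta> > 0" and drat: "\<delta> \<in> \<rat>"
begin

lemma num_le: "(LINT \<pi>:B|nu0. relval (mkt \<delta>) \<pi> t) \<le> (LINT \<pi>|nu0. relval (mkt \<delta>) \<pi> t)"
proof (cases "integrable nu0 (\<lambda>\<pi>. indicator B \<pi> *\<^sub>R relval (mkt \<delta>) \<pi> t)")
  case True
  show ?thesis unfolding set_lebesgue_integral_def
  proof (rule integral_mono[OF True relval_int[OF dpos drat]])
    fix \<pi> assume p: "\<pi> \<in> space nu0"
    have "0 \<le> relval (mkt \<delta>) \<pi> t"
      using relval_bounds[where \<pi>=\<pi>, OF dpos drat space_mkt[OF dpos drat p], of t] by simp
    then show "indicator B \<pi> *\<^sub>R relval (mkt \<delta>) \<pi> t \<le> relval (mkt \<delta>) \<pi> t"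
      by (auto simp: indicator_def)
  qed
next
  case False
  then show ?thesis unfolding set_lebesgue_integral_def
    using relval_int_pos[OF dpos drat, of t] by (simp add: not_integrable_integral_eq)
qed

lemma wd_le1: "wealth_dist nu0 (mkt \<delta>) t B \<le> 1"
  unfolding wealth_dist_def using num_le[of B t] relval_int_pos[OF dpos drat, of t]
  by (simp add: divide_le_eq)

lemma wd_empty: "wealth_dist nu0 (mkt \<delta>) t {} = 0"
  unfolding wealth_dist_def set_lebesgue_integral_def by simp

lemma wd_open_lower:
  assumes G: "openin Theta_top G" "G \<noteq> {}"
  shows "\<exists>\<kappa>>0. \<forall>t. \<kappa> \<le> wealth_dist nu0 (mkt \<delta>) t G"
proof -
  obtain x where x: "x \<in> G" using G(2) by blast
  obtain A where A: "finite A" "A \<subseteq> E_rat \<times> Bas" "x \<in> cyl A" "cyl A \<subseteq> G"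
    using cyl_basic[OF G(1) x] by blast
  define c where "c = (1 + \<delta>) ^ card (fst ` A)"
  define \<kappa> where "\<kappa> = measure nu0 (cyl A) / c\<^sup>2"
  have cpos: "c > 0" unfolding c_def using dpos by simp
  have kpos: "\<kappa> > 0" unfolding \<kappa>_def using cyl_pos[OF A(1,2,3)] cpos by simp
  have "\<kappa> \<le> wealth_dist nu0 (mkt \<delta>) t G" for t
  proof -
    define D where "D = (LINT \<pi>|nu0. relval (mkt \<delta>) \<pi> t)"
    have Dpos: "D > 0" unfolding D_def by (rule relval_int_pos[OF dpos drat])
    have Gs: "G \<in> sets nu0" by (rule open_sets[OF G(1)])
    have Cs: "cyl A \<in> sets nu0" by (rule cyl_sets[OF A(1,2)])
    have Vi: "integrable nu0 (\<lambda>\<pi>. relval (mkt \<delta>) \<pi> t)" by (rule relval_int[OF dpos drat])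
    have "\<kappa> * D \<le> (LINT \<pi>:cyl A|nu0. relval (mkt \<delta>) \<pi> t)"
      unfolding \<kappa>_def D_def c_def by (rule cyl_bound[OF dpos drat A(1,2)])
    also have "\<dots> \<le> (LINT \<pi>:G|nu0. relval (mkt \<delta>) \<pi> t)"
      unfolding set_lebesgue_integral_def
    proof (rule integral_mono[OF integrable_mult_indicator[OF Cs Vi] integrable_mult_indicator[OF Gs Vi]])
      fix \<pi> assume p: "\<pi> \<in> space nu0"
      have "0 \<le> relval (mkt \<delta>) \<pi> t"
        using relval_bounds[where \<pi>=\<pi>, OF dpos drat space_mkt[OF dpos drat p], of t] by simp
      then show "indicator (cyl A) \<pi> *\<^sub>R relval (mkt \<delta>) \<pi> t \<le> indicator G \<pi> *\<^sub>R relval (mkt \<delta>) \<pi> t"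
        using A(4) by (auto simp: indicator_def)
    qed
    finally have "\<kappa> * D \<le> (LINT \<pi>:G|nu0. relval (mkt \<delta>) \<pi> t)" .
    then show ?thesis unfolding wealth_dist_def D_def[symmetric] using Dpos by (simp add: le_divide_eq)
  qed
  then show ?thesis using kpos by blast
qed

end

lemma ereal_mult_nonpos: "0 \<le> a \<Longrightarrow> b \<le> 0 \<Longrightarrow> ereal a * b \<le> 0"
  by (cases b) (auto simp: mult_nonneg_nonpos)

theorem proposition3p8:
  fixes \<delta> :: real
  assumes "\<delta> > 0" and "\<delta> \<in> \<rat>"
  shows "LDP Theta_top (wealth_dist nu0 (mkt \<delta>)) (\<lambda>_. 0)"
proof -
  note dpos = assms(1) and drat = assms(2)
  let ?w = "wealth_dist nu0 (mkt \<delta>)"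
  have rf: "rate_function Theta_top (\<lambda>_. 0)"
    unfolding rate_function_def
  proof (intro conjI allI ballI)
    fix c :: ereal
    show "closedin Theta_top {x \<in> topspace Theta_top. (0::ereal) \<le> c}"
      by (cases "0 \<le> c") auto
  qed simp
  have up: "limsup (\<lambda>t. ereal (1 / real t) * eln (?w t F)) \<le> - (INF x\<in>F. (0::ereal))" for F
  proof (cases "F = {}")
    case True
    have "eventually (\<lambda>t. ereal (1 / real t) * eln (?w t F) \<le> -\<infinity>) sequentially"
    proof (rule eventually_sequentiallyI[of 1])
      fix t :: nat assume "1 \<le> t"
      then show "ereal (1 / real t) * eln (?w t F) \<le> -\<infinity>"
        using True wd_empty[OF dpos drat] by (simp add: eln_def)
    qed
    then have "limsup (\<lambda>t. ereal (1 / real t) * eln (?w t F)) \<le> -\<infinity>" by (rule Limsup_bounded)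
    then show ?thesis using True by simp
  next
    case False
    have "eventually (\<lambda>t. ereal (1 / real t) * eln (?w t F) \<le> 0) sequentially"
    proof (rule always_eventually, rule allI)
      fix t :: nat
      have "eln (?w t F) \<le> 0" using wd_le1[OF dpos drat, of t F] by (auto simp: eln_def)
      then show "ereal (1 / real t) * eln (?w t F) \<le> 0" by (intro ereal_mult_nonpos) auto
    qed
    then have "limsup (\<lambda>t. ereal (1 / real t) * eln (?w t F)) \<le> 0" by (rule Limsup_bounded)
    then show ?thesis using False by (simp add: INF_constant)
  qed
  have low: "- (INF x\<in>G. (0::ereal)) \<le> liminf (\<lambda>t. ereal (1 / real t) * eln (?w t G))"
    if G: "openin Theta_top G" for G
  proof (cases "G = {}")
    case True then show ?thesis by (simp add: top_ereal_def)
  next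
    case False
    obtain \<kappa> where k: "\<kappa> > 0" "\<And>t. \<kappa> \<le> ?w t G" using wd_open_lower[OF dpos drat G False] by blast
    have lim: "(\<lambda>t. ereal (ln \<kappa> / real t)) \<longlonglongrightarrow> ereal 0"
      by (intro tendsto_intros)
    have "liminf (\<lambda>t. ereal (ln \<kappa> / real t)) = 0"
      using lim_imp_Liminf[OF trivial_limit_sequentially lim] by (simp add: zero_ereal_def)
    moreover have "liminf (\<lambda>t. ereal (ln \<kappa> / real t)) \<le> liminf (\<lambda>t. ereal (1 / real t) * eln (?w t G))"
    proof (rule Liminf_mono, rule eventually_sequentiallyI[of 1])
      fix t :: nat assume t: "1 \<le> t"
      have wpos: "?w t G > 0" using k(1) k(2)[of t] by linarith
      have "ln \<kappa> \<le> ln (?w t G)" using k wpos by simp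
      then have "ln \<kappa> / real t \<le> ln (?w t G) / real t" using t by (intro divide_right_mono) auto
      then show "ereal (ln \<kappa> / real t) \<le> ereal (1 / real t) * eln (?w t G)"
        using wpos by (simp add: eln_def)
    qed
    ultimately show ?thesis using False by (simp add: INF_constant)
  qed
  show ?thesis unfolding LDP_def using rf up low by blast
qed


end
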